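(* A function $f:X\to Y$ between topological spaces is strongly-$SC^*$-closed if and only if for every subset $J\subseteq Y$ and every $SC^*$-open set $M$ in $X$ with $f^{-1}(J)\subseteq M$, there exists an $SC^*$-open set $N$ in $Y$ with $J\subseteq N$ and $f^{-1}(N)\subseteq M$.
   Context: For $A\subseteq Z$ in a topological space $Z$: $A$ is semi-open if $A\subseteq cl(int(A))$, semi-closed if its complement is semi-open; $scl(A)$ is the smallest semi-closed set containing $A$. $A$ is $c^*$-open if $int(cl(A))\subseteq A\subseteq cl(int(A))$. $A$ is $SC^*$-closed if $scl(A)\subseteq U$ whenever $A\subseteq U$ and $U$ is $c^*$-open; $A$ is $SC^*$-open if $Z\setminus A$ is $SC^*$-closed. A function $f:X\to Y$ is strongly-$SC^*$-closed if $f(M)$ is $SC^*$-closed in $Y$ for every $SC^*$-closed set $M$ in $X$. *)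

theory Defs
  imports "HOL-Analysis.Analysis"
begin

definition semi_open_in :: "'a topology \<Rightarrow> 'a set \<Rightarrow> bool" where
  "semi_open_in Z A \<longleftrightarrow> A \<subseteq> topspace Z \<and> A \<subseteq> Z closure_of (Z interior_of A)"

definition semi_closed_in :: "'a topology \<Rightarrow> 'a set \<Rightarrow> bool" where
  "semi_closed_in Z A \<longleftrightarrow> A \<subseteq> topspace Z \<and> semi_open_in Z (topspace Z - A)"

definition scl_of :: "'a topology \<Rightarrow> 'a set \<Rightarrow> 'a set" where
  "scl_of Z A = \<Inter>{B. semi_closed_in Z B \<and> A \<subseteq> B}"

definition cstar_open_in :: "'a topology \<Rightarrow> 'a set \<Rightarrow> bool" where
  "cstar_open_in Z A \<longleftrightarrow> A \<subseteq> topspace Z \<and>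
     Z interior_of (Z closure_of A) \<subseteq> A \<and> A \<subseteq> Z closure_of (Z interior_of A)"

definition SCstar_closed_in :: "'a topology \<Rightarrow> 'a set \<Rightarrow> bool" where
  "SCstar_closed_in Z A \<longleftrightarrow> A \<subseteq> topspace Z \<and>
     (\<forall>U. cstar_open_in Z U \<and> A \<subseteq> U \<longrightarrow> scl_of Z A \<subseteq> U)"

definition SCstar_open_in :: "'a topology \<Rightarrow> 'a set \<Rightarrow> bool" where
  "SCstar_open_in Z A \<longleftrightarrow> A \<subseteq> topspace Z \<and> SCstar_closed_in Z (topspace Z - A)"

definition strongly_SCstar_closed_map :: "'a topology \<Rightarrow> 'b topology \<Rightarrow> ('a \<Rightarrow> 'b) \<Rightarrow> bool" where
  "strongly_SCstar_closed_map X Y f \<longleftrightarrow>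
     (\<forall>M. SCstar_closed_in X M \<longrightarrow> SCstar_closed_in Y (f ` M))"

end

theory Submission
  imports Defs
begin

theorem theorem3p3:
  fixes X :: "'a topology" and Y :: "'b topology" and f :: "'a \<Rightarrow> 'b"
  assumes "f \<in> topspace X \<rightarrow> topspace Y"
  shows "strongly_SCstar_closed_map X Y f \<longleftrightarrow>
    (\<forall>J M. J \<subseteq> topspace Y \<and> SCstar_open_in X M \<and> {x \<in> topspace X. f x \<in> J} \<subseteq> M \<longrightarrow>
       (\<exists>N. SCstar_open_in Y N \<and> J \<subseteq> N \<and> {x \<in> topspace X. f x \<in> N} \<subseteq> M))"
proof
  assume H: "strongly_SCstar_closed_map X Y f"
  show "\<forall>J M. J \<subseteq> topspace Y \<and> SCstar_open_in X M \<and> {x \<in> topspace X. f x \<in> J} \<subseteq> M \<longrightarrow>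
       (\<exists>N. SCstar_open_in Y N \<and> J \<subseteq> N \<and> {x \<in> topspace X. f x \<in> N} \<subseteq> M)"
  proof (intro allI impI)
    fix J M
    assume A: "J \<subseteq> topspace Y \<and> SCstar_open_in X M \<and> {x \<in> topspace X. f x \<in> J} \<subseteq> M"
    have c: "SCstar_closed_in X (topspace X - M)" using A by (simp add: SCstar_open_in_def)
    hence c2: "SCstar_closed_in Y (f ` (topspace X - M))" using H by (simp add: strongly_SCstar_closed_map_def)
    have sub: "f ` (topspace X - M) \<subseteq> topspace Y" using assms by auto
    have eq: "topspace Y - (topspace Y - f ` (topspace X - M)) = f ` (topspace X - M)" using sub by blast
    show "\<exists>N. SCstar_open_in Y N \<and> J \<subseteq> N \<and> {x \<in> topspace X. f x \<in> N} \<subseteq> M"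
    proof (intro exI conjI)
      show "SCstar_open_in Y (topspace Y - f ` (topspace X - M))"
        unfolding SCstar_open_in_def eq using c2 by simp
      show "J \<subseteq> topspace Y - f ` (topspace X - M)" using A by blast
      show "{x \<in> topspace X. f x \<in> topspace Y - f ` (topspace X - M)} \<subseteq> M" by blast
    qed
  qed
next
  assume H: "\<forall>J M. J \<subseteq> topspace Y \<and> SCstar_open_in X M \<and> {x \<in> topspace X. f x \<in> J} \<subseteq> M \<longrightarrow>
       (\<exists>N. SCstar_open_in Y N \<and> J \<subseteq> N \<and> {x \<in> topspace X. f x \<in> N} \<subseteq> M)"
  show "strongly_SCstar_closed_map X Y f"
    unfolding strongly_SCstar_closed_map_def
  proof (intro allI impI)
    fix M assume c: "SCstar_closed_in X M"
    hence MX: "M \<subseteq> topspace X" by (simp add: SCstar_closed_in_def)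
    have eqX: "topspace X - (topspace X - M) = M" using MX by blast
    have o: "SCstar_open_in X (topspace X - M)" unfolding SCstar_open_in_def eqX using c by simp
    have "{x \<in> topspace X. f x \<in> topspace Y - f ` M} \<subseteq> topspace X - M" by blast
    then obtain N where N: "SCstar_open_in Y N" "topspace Y - f ` M \<subseteq> N"
      "{x \<in> topspace X. f x \<in> N} \<subseteq> topspace X - M"
      using H[rule_format, of "topspace Y - f ` M" "topspace X - M"] o by blast
    have sub: "f ` M \<subseteq> topspace Y" using assms MX by auto
    have "f ` M = topspace Y - N" using N(2,3) sub MX by blast
    thus "SCstar_closed_in Y (f ` M)" using N(1) by (simp add: SCstar_open_in_def)
  qed
qed

end
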